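(* Let $f\in C(I)$, the partition $\Delta$ and the sequence of base functions $b=\{b_r\}$ (with $b_r\in C(I)$, $b_r(x_0)=f(x_0)$, $b_r(x_N)=f(x_N)$, $\sup_r\|b_r\|_\infty<\infty$) be fixed, and fix $s\in[0,1)$. Let $B$ be the set of sequences $\alpha=\{\alpha_r\}_{r\in\mathbb{N}}$, $\alpha_r=(\alpha_{1,r},\dots,\alpha_{N,r})$, with $\alpha_{i,r}\in Lip_d(I)$ and $\|\alpha\|_\infty\le s$, equipped with the metric $\|\alpha-\beta\|_\infty=\sup_r\max_i\|\alpha_{i,r}-\beta_{i,r}\|_\infty$. Then the map $\mathcal{B}:B\to C(I)$, $\mathcal{B}(\alpha)=f^\alpha_{\Delta,b}$, is continuous (with respect to the supremum norm on $C(I)$).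
   Context: $I=[x_0,x_N]$ with partition $\Delta: x_0<x_1<\dots<x_N$, $I_i=[x_{i-1},x_i]$, $l_i:I\to I_i$ the affine bijection $l_i(x)=\frac{x_i-x_{i-1}}{x_N-x_0}x+\frac{x_Nx_{i-1}-x_0x_i}{x_N-x_0}$, $Q_i=l_i^{-1}$. $Lip_d(I)$ ($0<d\le1$): real functions $g$ on $I$ with $\sup_{x\ne y}|g(x)-g(y)|/|x-y|^d<\infty$. $\|\alpha\|_\infty:=\sup_r\max_i\|\alpha_{i,r}\|_\infty$. For $\alpha\in B$, $f^\alpha_{\Delta,b}$ (the non-stationary $\alpha$-fractal function) is the uniform limit, independent of $g\in C_f(I)=\{g\in C(I):g(x_0)=f(x_0),g(x_N)=f(x_N)\}$, of $T^{\alpha_1}\circ\cdots\circ T^{\alpha_r}g$, where $(T^{\alpha_r}g)(x)=f(x)+\alpha_{i,r}(Q_i(x))(g-b_r)(Q_i(x))$ for $x\in I_i$. *)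

theory Defs
  imports "HOL-Analysis.Analysis"
begin

definition Iint :: "(nat \<Rightarrow> real) \<Rightarrow> nat \<Rightarrow> real set" where
  "Iint x N = {x 0 .. x N}"

text \<open>Q_i = inverse of the affine bijection l_i : I -> I_i.\<close>
definition Qmap :: "(nat \<Rightarrow> real) \<Rightarrow> nat \<Rightarrow> nat \<Rightarrow> real \<Rightarrow> real" where
  "Qmap x N i y = x 0 + (y - x (i - 1)) * (x N - x 0) / (x i - x (i - 1))"

text \<open>Index of the subinterval I_i = [x (i-1), x i] containing t (leftmost one at nodes).\<close>
definition sub_index :: "(nat \<Rightarrow> real) \<Rightarrow> nat \<Rightarrow> real \<Rightarrow> nat" where
  "sub_index x N t = (LEAST i. 1 \<le> i \<and> t \<le> x i)"

text \<open>alpha r i : the scaling function alpha_{i,r}; b r : base function b_r.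
  (T^{alpha_r} g)(t) = f(t) + alpha_{i,r}(Q_i t) * (g - b_r)(Q_i t) for t in I_i.\<close>
definition Top ::
  "(real \<Rightarrow> real) \<Rightarrow> (nat \<Rightarrow> real) \<Rightarrow> nat \<Rightarrow> (nat \<Rightarrow> real \<Rightarrow> real)
    \<Rightarrow> (nat \<Rightarrow> nat \<Rightarrow> real \<Rightarrow> real) \<Rightarrow> nat \<Rightarrow> (real \<Rightarrow> real) \<Rightarrow> real \<Rightarrow> real" where
  "Top f x N b alpha r g t =
     (let i = sub_index x N t; q = Qmap x N i t
      in f t + alpha r i q * (g q - b r q))"

fun Tcomp ::
  "(real \<Rightarrow> real) \<Rightarrow> (nat \<Rightarrow> real) \<Rightarrow> nat \<Rightarrow> (nat \<Rightarrow> real \<Rightarrow> real)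
    \<Rightarrow> (nat \<Rightarrow> nat \<Rightarrow> real \<Rightarrow> real) \<Rightarrow> nat \<Rightarrow> nat \<Rightarrow> (real \<Rightarrow> real) \<Rightarrow> real \<Rightarrow> real" where
  "Tcomp f x N b alpha n 0 g = g"
| "Tcomp f x N b alpha n (Suc m) g = Top f x N b alpha n (Tcomp f x N b alpha (Suc n) m g)"

definition Cf :: "(real \<Rightarrow> real) \<Rightarrow> (nat \<Rightarrow> real) \<Rightarrow> nat \<Rightarrow> (real \<Rightarrow> real) set" where
  "Cf f x N = {g. continuous_on (Iint x N) g \<and> g (x 0) = f (x 0) \<and> g (x N) = f (x N)}"

definition fractal ::
  "(real \<Rightarrow> real) \<Rightarrow> (nat \<Rightarrow> real) \<Rightarrow> nat \<Rightarrow> (nat \<Rightarrow> real \<Rightarrow> real)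
    \<Rightarrow> (nat \<Rightarrow> nat \<Rightarrow> real \<Rightarrow> real) \<Rightarrow> real \<Rightarrow> real" where
  "fractal f x N b alpha = (THE phi.
      (\<forall>g\<in>Cf f x N. uniform_limit (Iint x N) (\<lambda>r. Tcomp f x N b alpha 1 r g) phi sequentially)
      \<and> (\<forall>t. t \<notin> Iint x N \<longrightarrow> phi t = 0))"

definition lip_d :: "real \<Rightarrow> real set \<Rightarrow> (real \<Rightarrow> real) \<Rightarrow> bool" where
  "lip_d d S g = (\<exists>L. \<forall>u\<in>S. \<forall>v\<in>S. \<bar>g u - g v\<bar> \<le> L * \<bar>u - v\<bar> powr d)"

definition Bset :: "(nat \<Rightarrow> real) \<Rightarrow> nat \<Rightarrow> real \<Rightarrow> real \<Rightarrow> (nat \<Rightarrow> nat \<Rightarrow> real \<Rightarrow> real) set" where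
  "Bset x N d s = {alpha. (\<forall>r\<ge>1. \<forall>i\<in>{1..N}. lip_d d (Iint x N) (alpha r i))
      \<and> (\<forall>r\<ge>1. \<forall>i\<in>{1..N}. \<forall>t\<in>Iint x N. \<bar>alpha r i t\<bar> \<le> s)}"

end

theory Submission
  imports Defs
begin

locale fr =
  fixes f :: "real \<Rightarrow> real" and x :: "nat \<Rightarrow> real" and N :: nat
    and b :: "nat \<Rightarrow> real \<Rightarrow> real" and s F M :: real
  assumes N: "N \<ge> 1"
    and part: "\<And>i. i < N \<Longrightarrow> x i < x (Suc i)"
    and Fb: "\<And>t. t \<in> Iint x N \<Longrightarrow> \<bar>f t\<bar> \<le> F"
    and Mb: "\<And>r t. t \<in> Iint x N \<Longrightarrow> \<bar>b r t\<bar> \<le> M"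
    and s: "0 \<le> s" "s < 1"
    and F0: "0 \<le> F" and M0: "0 \<le> M"
begin

lemma xmono: "j \<le> N \<Longrightarrow> i \<le> j \<Longrightarrow> x i \<le> x j"
proof (induction j)
  case 0 then show ?case by simp
next
  case (Suc j)
  show ?case
  proof (cases "i = Suc j")
    case True then show ?thesis by simp
  next
    case False
    then have "i \<le> j" using Suc by simp
    with Suc have "x i \<le> x j" by simp
    also have "x j < x (Suc j)" using part Suc.prems by simp
    finally show ?thesis by simp
  qed
qed

lemma x0N: "x 0 < x N"
proof -
  have "x 0 \<le> x (N - 1)" using xmono by simp
  also have "x (N - 1) < x N" using part[of "N-1"] N by simp
  finally show ?thesis .
qed

lemma subidx:
  assumes t: "t \<in> Iint x N"
  shows "1 \<le> sub_index x N t \<and> sub_index x N t \<le> N \<and> x (sub_index x N t - 1) \<le> t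
         \<and> t \<le> x (sub_index x N t)"
proof -
  let ?i = "sub_index x N t"
  have ex: "1 \<le> N \<and> t \<le> x N" using N t by (simp add: Iint_def)
  have P: "1 \<le> ?i \<and> t \<le> x ?i" unfolding sub_index_def by (rule LeastI[of _ N]) (use ex in auto)
  have le: "?i \<le> N" unfolding sub_index_def by (rule Least_le) (use ex in auto)
  have "x (?i - 1) \<le> t"
  proof (cases "?i = 1")
    case True then show ?thesis using t by (simp add: Iint_def)
  next
    case False
    then have "?i - 1 < ?i" "1 \<le> ?i - 1" using P by auto
    then have "\<not> (1 \<le> ?i - 1 \<and> t \<le> x (?i - 1))"
      unfolding sub_index_def using not_less_Least by blast
    with \<open>1 \<le> ?i - 1\<close> show ?thesis by simp
  qed
  with P le show ?thesis by simp
qed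

lemma Q_in:
  assumes t: "t \<in> Iint x N"
  shows "Qmap x N (sub_index x N t) t \<in> Iint x N"
proof -
  let ?i = "sub_index x N t"
  have h: "1 \<le> ?i" "?i \<le> N" "x (?i - 1) \<le> t" "t \<le> x ?i" using subidx[OF t] by auto
  have lt: "x (?i - 1) < x ?i" using part[of "?i - 1"] h by simp
  define a where "a = x (?i - 1)"
  define c where "c = x ?i"
  define L where "L = x N - x 0"
  have L: "L > 0" using x0N by (simp add: L_def)
  have ac: "a < c" "a \<le> t" "t \<le> c" using lt h by (auto simp: a_def c_def)
  have r0: "0 \<le> (t - a) / (c - a)" using ac by simp
  have r1: "(t - a) / (c - a) \<le> 1" using ac by (simp add: divide_le_eq)
  have q: "Qmap x N ?i t = x 0 + (t - a) / (c - a) * L"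
    by (simp add: Qmap_def a_def c_def L_def)
  have "0 \<le> (t - a) / (c - a) * L" using r0 L by (intro mult_nonneg_nonneg) auto
  moreover have "(t - a) / (c - a) * L \<le> L" using mult_right_mono[OF r1, of L] L by linarith
  ultimately show ?thesis using q by (simp add: Iint_def L_def)
qed


lemma Top_form:
  assumes t: "t \<in> Iint x N"
  shows "\<exists>i q. i \<in> {1..N} \<and> q \<in> Iint x N \<and>
     (\<forall>alpha r g. Top f x N b alpha r g t = f t + alpha r i q * (g q - b r q))"
  using subidx[OF t] Q_in[OF t] by (auto simp: Top_def Let_def)

lemma Bset_bound: "alpha \<in> Bset x N d s \<Longrightarrow> r \<ge> 1 \<Longrightarrow> i \<in> {1..N} \<Longrightarrow> q \<in> Iint x N
   \<Longrightarrow> \<bar>alpha r i q\<bar> \<le> s"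
  by (simp add: Bset_def)

lemma Top_bound:
  assumes a: "alpha \<in> Bset x N d s" and r: "r \<ge> 1" and t: "t \<in> Iint x N"
    and h: "\<And>q. q \<in> Iint x N \<Longrightarrow> \<bar>h q\<bar> \<le> C"
  shows "\<bar>Top f x N b alpha r h t\<bar> \<le> F + s * (C + M)"
proof -
  obtain i q where iq: "i \<in> {1..N}" "q \<in> Iint x N"
    and e: "Top f x N b alpha r h t = f t + alpha r i q * (h q - b r q)"
    using Top_form[OF t] by blast
  have A: "\<bar>alpha r i q\<bar> \<le> s" using Bset_bound[OF a r iq] .
  have B: "\<bar>h q - b r q\<bar> \<le> C + M" using h[OF iq(2)] Mb[OF iq(2), of r] by linarith
  have "\<bar>alpha r i q * (h q - b r q)\<bar> \<le> s * (C + M)"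
    unfolding abs_mult using A B by (intro mult_mono) auto
  then show ?thesis using e Fb[OF t] by linarith
qed

lemma Top_contr:
  assumes a: "alpha \<in> Bset x N d s" and r: "r \<ge> 1" and t: "t \<in> Iint x N"
    and h: "\<And>q. q \<in> Iint x N \<Longrightarrow> \<bar>g q - h q\<bar> \<le> D"
  shows "\<bar>Top f x N b alpha r g t - Top f x N b alpha r h t\<bar> \<le> s * D"
proof -
  obtain i q where iq: "i \<in> {1..N}" "q \<in> Iint x N"
    and e: "\<And>g. Top f x N b alpha r g t = f t + alpha r i q * (g q - b r q)"
    using Top_form[OF t] by blast
  have A: "\<bar>alpha r i q\<bar> \<le> s" using Bset_bound[OF a r iq] .
  have "\<bar>alpha r i q * (g q - h q)\<bar> \<le> s * D"
    unfolding abs_mult using A h[OF iq(2)] by (intro mult_mono) auto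
  then show ?thesis using e[of g] e[of h] by (simp add: algebra_simps)
qed

lemma Top_diff:
  assumes a: "alpha \<in> Bset x N d s" and be: "beta \<in> Bset x N d s" and r: "r \<ge> 1"
    and t: "t \<in> Iint x N"
    and close: "\<And>i q. i \<in> {1..N} \<Longrightarrow> q \<in> Iint x N \<Longrightarrow> \<bar>alpha r i q - beta r i q\<bar> \<le> \<delta>"
    and G: "\<And>q. q \<in> Iint x N \<Longrightarrow> \<bar>G q\<bar> \<le> C"
    and GH: "\<And>q. q \<in> Iint x N \<Longrightarrow> \<bar>G q - H q\<bar> \<le> D"
  shows "\<bar>Top f x N b alpha r G t - Top f x N b beta r H t\<bar> \<le> \<delta> * (C + M) + s * D"
proof -
  obtain i q where iq: "i \<in> {1..N}" "q \<in> Iint x N"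
    and e: "\<And>alpha g. Top f x N b alpha r g t = f t + alpha r i q * (g q - b r q)"
    using Top_form[OF t] by blast
  have A: "\<bar>beta r i q\<bar> \<le> s" using Bset_bound[OF be r iq] .
  have B: "\<bar>G q - b r q\<bar> \<le> C + M" using G[OF iq(2)] Mb[OF iq(2), of r] by linarith
  have 1: "\<bar>(alpha r i q - beta r i q) * (G q - b r q)\<bar> \<le> \<delta> * (C + M)"
    unfolding abs_mult using close[OF iq] B by (intro mult_mono) auto
  have 2: "\<bar>beta r i q * (G q - H q)\<bar> \<le> s * D"
    unfolding abs_mult using A GH[OF iq(2)] by (intro mult_mono) auto
  have "Top f x N b alpha r G t - Top f x N b beta r H t
      = (alpha r i q - beta r i q) * (G q - b r q) + beta r i q * (G q - H q)"
    using e[of alpha G] e[of beta H] by (simp add: algebra_simps)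
  then show ?thesis using 1 2 by (smt (verit))
qed

definition "K = (F + s * M) / (1 - s)"

lemma K: "C \<ge> K \<Longrightarrow> F + s * (C + M) \<le> C"
  using s by (simp add: K_def field_simps)

lemma K0: "K \<ge> 0" using s F0 M0 by (simp add: K_def)

lemma Tc_bound:
  assumes a: "alpha \<in> Bset x N d s" and C: "C \<ge> K"
    and g: "\<And>q. q \<in> Iint x N \<Longrightarrow> \<bar>g q\<bar> \<le> C"
  shows "n \<ge> 1 \<Longrightarrow> t \<in> Iint x N \<Longrightarrow> \<bar>Tcomp f x N b alpha n m g t\<bar> \<le> C"
proof (induction m arbitrary: n t)
  case 0 then show ?case using g by simp
next
  case (Suc m)
  have "\<bar>Tcomp f x N b alpha n (Suc m) g t\<bar> \<le> F + s * (C + M)"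
    unfolding Tcomp.simps by (rule Top_bound[OF a Suc.prems]) (use Suc.IH in auto)
  then show ?case using K[OF C] by linarith
qed

lemma Tc_contr:
  assumes a: "alpha \<in> Bset x N d s"
    and g: "\<And>q. q \<in> Iint x N \<Longrightarrow> \<bar>g q - h q\<bar> \<le> D"
  shows "n \<ge> 1 \<Longrightarrow> t \<in> Iint x N \<Longrightarrow>
     \<bar>Tcomp f x N b alpha n m g t - Tcomp f x N b alpha n m h t\<bar> \<le> s ^ m * D"
proof (induction m arbitrary: n t)
  case 0 then show ?case using g by simp
next
  case (Suc m)
  have "\<bar>Tcomp f x N b alpha n (Suc m) g t - Tcomp f x N b alpha n (Suc m) h t\<bar> \<le> s * (s ^ m * D)"
    unfolding Tcomp.simps by (rule Top_contr[OF a Suc.prems]) (use Suc.IH in auto)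
  then show ?case by simp
qed

lemma Tc_split: "Tcomp f x N b alpha n (m + k) g = Tcomp f x N b alpha n m (Tcomp f x N b alpha (n + m) k g)"
  by (induction m arbitrary: n) auto

lemma Tc_diff:
  assumes a: "alpha \<in> Bset x N d s" and be: "beta \<in> Bset x N d s" and C: "C \<ge> K"
    and close: "\<And>r i q. r \<ge> 1 \<Longrightarrow> i \<in> {1..N} \<Longrightarrow> q \<in> Iint x N \<Longrightarrow> \<bar>alpha r i q - beta r i q\<bar> \<le> \<delta>"
    and dl: "\<delta> \<ge> 0"
    and g: "\<And>q. q \<in> Iint x N \<Longrightarrow> \<bar>g q\<bar> \<le> C"
  shows "n \<ge> 1 \<Longrightarrow> t \<in> Iint x N \<Longrightarrow>
     \<bar>Tcomp f x N b alpha n m g t - Tcomp f x N b beta n m g t\<bar> \<le> \<delta> * (C + M) / (1 - s)"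
proof (induction m arbitrary: n t)
  case 0 
  have "0 \<le> C" using C K0 by linarith
  then show ?case using dl s M0 by simp
next
  case (Suc m)
  have "\<bar>Tcomp f x N b alpha n (Suc m) g t - Tcomp f x N b beta n (Suc m) g t\<bar>
     \<le> \<delta> * (C + M) + s * (\<delta> * (C + M) / (1 - s))"
    unfolding Tcomp.simps
  proof (rule Top_diff[OF a be _ Suc.prems(2)])
    show "1 \<le> n" by fact
    show "\<And>i q. i \<in> {1..N} \<Longrightarrow> q \<in> Iint x N \<Longrightarrow> \<bar>alpha n i q - beta n i q\<bar> \<le> \<delta>"
      using close Suc.prems by auto
    show "\<And>q. q \<in> Iint x N \<Longrightarrow> \<bar>Tcomp f x N b alpha (Suc n) m g q\<bar> \<le> C"
      using Tc_bound[OF a C g] by simp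
    show "\<And>q. q \<in> Iint x N \<Longrightarrow> \<bar>Tcomp f x N b alpha (Suc n) m g q - Tcomp f x N b beta (Suc n) m g q\<bar>
       \<le> \<delta> * (C + M) / (1 - s)" using Suc.IH by simp
  qed
  also have "\<dots> = \<delta> * (C + M) / (1 - s)" using s by (simp add: field_simps)
  finally show ?case .
qed


lemma spow_small: "e > 0 \<Longrightarrow> \<exists>M0. \<forall>m\<ge>M0. s ^ m * D < e"
proof -
  assume e: "e > 0"
  have "(\<lambda>m. s ^ m * D) \<longlonglongrightarrow> 0 * D"
    by (intro tendsto_mult tendsto_const LIMSEQ_power_zero) (use s in auto)
  then have "\<forall>\<^sub>F m in sequentially. dist (s ^ m * D) 0 < e" using e
    by (simp add: tendsto_iff)
  then obtain N0 where "\<forall>n\<ge>N0. dist (s ^ n * D) 0 < e" unfolding eventually_sequentially by blast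
  then have "\<forall>n\<ge>N0. s ^ n * D < e" by (simp add: dist_real_def abs_less_iff)
  then show ?thesis by blast
qed

lemma lim_exists:
  assumes a: "alpha \<in> Bset x N d s" and C: "C \<ge> K"
    and g: "\<And>q. q \<in> Iint x N \<Longrightarrow> \<bar>g q\<bar> \<le> C"
  shows "\<exists>l. uniform_limit (Iint x N) (\<lambda>m. Tcomp f x N b alpha 1 m g) l sequentially"
proof -
  have "uniformly_Cauchy_on (Iint x N) (\<lambda>m. Tcomp f x N b alpha 1 m g)"
  proof (rule uniformly_Cauchy_onI')
    fix e :: real assume e: "e > 0"
    obtain M0 where M0: "\<And>m. m \<ge> M0 \<Longrightarrow> s ^ m * (2 * C) < e" using spow_small[OF e] by blast
    show "\<exists>M. \<forall>t\<in>Iint x N. \<forall>m\<ge>M. \<forall>n>m. dist (Tcomp f x N b alpha 1 m g t) (Tcomp f x N b alpha 1 n g t) < e"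
    proof (intro exI ballI allI impI)
      fix t m n assume t: "t \<in> Iint x N" and m: "m \<ge> M0" and n: "n > m"
      have eq: "Tcomp f x N b alpha 1 n g = Tcomp f x N b alpha 1 m (Tcomp f x N b alpha (1 + m) (n - m) g)"
        using Tc_split[of alpha 1 m "n - m" g] n by simp
      have "\<bar>Tcomp f x N b alpha 1 m g t - Tcomp f x N b alpha 1 m (Tcomp f x N b alpha (1 + m) (n - m) g) t\<bar>
         \<le> s ^ m * (2 * C)"
      proof (rule Tc_contr[OF a _ _ t])
        fix q assume q: "q \<in> Iint x N"
        show "\<bar>g q - Tcomp f x N b alpha (1 + m) (n - m) g q\<bar> \<le> 2 * C"
          using g[OF q] Tc_bound[where g=g and n="1 + m" and m="n - m" and t=q, OF a C g] q by linarith
      qed simp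
      then show "dist (Tcomp f x N b alpha 1 m g t) (Tcomp f x N b alpha 1 n g t) < e"
        using M0[OF m] eq by (simp add: dist_real_def)
    qed
  qed
  then show ?thesis using Cauchy_uniformly_convergent unfolding uniformly_convergent_on_def by blast
qed

lemma same_lim:
  assumes a: "alpha \<in> Bset x N d s"
    and gh: "\<And>q. q \<in> Iint x N \<Longrightarrow> \<bar>g q - h q\<bar> \<le> D"
    and l: "uniform_limit (Iint x N) (\<lambda>m. Tcomp f x N b alpha 1 m g) l sequentially"
  shows "uniform_limit (Iint x N) (\<lambda>m. Tcomp f x N b alpha 1 m h) l sequentially"
  unfolding uniform_limit_sequentially_iff
proof (intro allI impI)
  fix e :: real assume e: "e > 0"
  then have "e / 2 > 0" by simp
  from l[unfolded uniform_limit_sequentially_iff, rule_format, OF this]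
  obtain N1 where N1: "\<And>n t. n \<ge> N1 \<Longrightarrow> t \<in> Iint x N \<Longrightarrow> dist (Tcomp f x N b alpha 1 n g t) (l t) < e / 2"
    by blast
  obtain N2 where N2: "\<And>m. m \<ge> N2 \<Longrightarrow> s ^ m * D < e / 2" using spow_small[OF \<open>e/2>0\<close>] by blast
  show "\<exists>N0. \<forall>n\<ge>N0. \<forall>t\<in>Iint x N. dist (Tcomp f x N b alpha 1 n h t) (l t) < e"
  proof (intro exI[of _ "max N1 N2"] allI impI ballI)
    fix n t assume n: "max N1 N2 \<le> n" and t: "t \<in> Iint x N"
    have "\<bar>Tcomp f x N b alpha 1 n g t - Tcomp f x N b alpha 1 n h t\<bar> \<le> s ^ n * D"
      by (rule Tc_contr[OF a gh _ t]) auto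
    then show "dist (Tcomp f x N b alpha 1 n h t) (l t) < e"
    proof -
      have 1: "\<bar>Tcomp f x N b alpha 1 n g t - l t\<bar> < e / 2" using N1[OF _ t, of n] n by (simp add: dist_real_def)
      have 2: "s ^ n * D < e / 2" using N2[of n] n by simp
      have 3: "\<bar>Tcomp f x N b alpha 1 n h t - l t\<bar> \<le> \<bar>Tcomp f x N b alpha 1 n g t - Tcomp f x N b alpha 1 n h t\<bar> + \<bar>Tcomp f x N b alpha 1 n g t - l t\<bar>"
        by linarith
      show ?thesis unfolding dist_real_def using 1 2 3 \<open>\<bar>Tcomp f x N b alpha 1 n g t - Tcomp f x N b alpha 1 n h t\<bar> \<le> s ^ n * D\<close> by linarith
    qed
  qed
qed


lemma fractal_lim:
  assumes a: "alpha \<in> Bset x N d s" and fcont: "continuous_on (Iint x N) f"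
    and bdd: "\<And>g::real\<Rightarrow>real. continuous_on (Iint x N) g \<Longrightarrow> \<exists>B. \<forall>t\<in>Iint x N. \<bar>g t\<bar> \<le> B"
    and t: "t \<in> Iint x N"
  shows "(\<lambda>m. Tcomp f x N b alpha 1 m f t) \<longlonglongrightarrow> fractal f x N b alpha t"
proof -
  define C where "C = F + K"
  have C: "C \<ge> K" "\<And>q. q \<in> Iint x N \<Longrightarrow> \<bar>f q\<bar> \<le> C"
    using F0 apply (simp add: C_def)
    using Fb K0 unfolding C_def by fastforce
  obtain l where l: "uniform_limit (Iint x N) (\<lambda>m. Tcomp f x N b alpha 1 m f) l sequentially"
    using lim_exists[where g=f, OF a C] by blast
  define phi where "phi = (\<lambda>t. if t \<in> Iint x N then l t else 0)"
  let ?P = "\<lambda>phi. (\<forall>g\<in>Cf f x N. uniform_limit (Iint x N) (\<lambda>r. Tcomp f x N b alpha 1 r g) phi sequentially)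
      \<and> (\<forall>t. t \<notin> Iint x N \<longrightarrow> phi t = 0)"
  have fCf: "f \<in> Cf f x N" using fcont by (simp add: Cf_def)
  have Pphi: "?P phi"
  proof (intro conjI ballI allI impI)
    fix g assume g: "g \<in> Cf f x N"
    then have "continuous_on (Iint x N) g" by (simp add: Cf_def)
    then obtain B where B: "\<And>q. q \<in> Iint x N \<Longrightarrow> \<bar>g q\<bar> \<le> B" using bdd by blast
    have "uniform_limit (Iint x N) (\<lambda>r. Tcomp f x N b alpha 1 r g) l sequentially"
    proof (rule same_lim[OF a _ l, where D = "C + B"])
      fix q assume q: "q \<in> Iint x N"
      have "\<bar>f q - g q\<bar> \<le> \<bar>f q\<bar> + \<bar>g q\<bar>" by (rule abs_triangle_ineq4)
      then show "\<bar>f q - g q\<bar> \<le> C + B" using C(2)[OF q] B[OF q] by linarith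
    qed
    moreover have "uniform_limit (Iint x N) (\<lambda>r. Tcomp f x N b alpha 1 r g) l sequentially
       \<longleftrightarrow> uniform_limit (Iint x N) (\<lambda>r. Tcomp f x N b alpha 1 r g) phi sequentially"
      by (rule uniform_limit_cong') (auto simp: phi_def)
    ultimately show "uniform_limit (Iint x N) (\<lambda>r. Tcomp f x N b alpha 1 r g) phi sequentially" by simp
  next
    fix t assume "t \<notin> Iint x N" then show "phi t = 0" by (simp add: phi_def)
  qed
  have "fractal f x N b alpha = phi"
    unfolding fractal_def
  proof (rule the_equality)
    show "?P phi" by (rule Pphi)
    fix psi assume psi: "?P psi"
    show "psi = phi"
    proof
      fix u show "psi u = phi u"
      proof (cases "u \<in> Iint x N")
        case True
        have 1: "(\<lambda>m. Tcomp f x N b alpha 1 m f u) \<longlonglongrightarrow> psi u"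
          using psi fCf True by (intro tendsto_uniform_limitI[OF _ True]) blast
        have 2: "(\<lambda>m. Tcomp f x N b alpha 1 m f u) \<longlonglongrightarrow> phi u"
          using Pphi fCf True by (intro tendsto_uniform_limitI[OF _ True]) blast
        show ?thesis using LIMSEQ_unique[OF 1 2] .
      next
        case False then show ?thesis using psi Pphi by simp
      qed
    qed
  qed
  moreover have "uniform_limit (Iint x N) (\<lambda>r. Tcomp f x N b alpha 1 r f) phi sequentially"
    using Pphi fCf by blast
  ultimately show ?thesis using tendsto_uniform_limitI[OF _ t] by metis
qed

end

lemma cont_bdd: "continuous_on {a..c::real} (g::real \<Rightarrow> real) \<Longrightarrow> \<exists>B. \<forall>t\<in>{a..c}. \<bar>g t\<bar> \<le> B"
proof -
  assume "continuous_on {a..c::real} g"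
  then have "compact (g ` {a..c})" by (intro compact_continuous_image) auto
  then have "bounded (g ` {a..c})" by (rule compact_imp_bounded)
  then show ?thesis unfolding bounded_iff by auto
qed

theorem mainTheorem11:
  fixes f :: "real \<Rightarrow> real" and x :: "nat \<Rightarrow> real" and N :: nat
    and b :: "nat \<Rightarrow> real \<Rightarrow> real" and s d :: real
  assumes N: "N \<ge> 1"
    and part: "\<And>i. i < N \<Longrightarrow> x i < x (Suc i)"
    and fcont: "continuous_on (Iint x N) f"
    and bcont: "\<And>r. continuous_on (Iint x N) (b r)"
    and b0: "\<And>r. b r (x 0) = f (x 0)"
    and bN: "\<And>r. b r (x N) = f (x N)"
    and bbdd: "\<exists>M. \<forall>r. \<forall>t\<in>Iint x N. \<bar>b r t\<bar> \<le> M"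
    and s: "0 \<le> s" "s < 1"
    and d: "0 < d" "d \<le> 1"
  shows "\<forall>alpha\<in>Bset x N d s. \<forall>\<epsilon>>0. \<exists>\<delta>>0. \<forall>beta\<in>Bset x N d s.
           (\<forall>r\<ge>1. \<forall>i\<in>{1..N}. \<forall>t\<in>Iint x N. \<bar>alpha r i t - beta r i t\<bar> \<le> \<delta>) \<longrightarrow>
           (\<forall>t\<in>Iint x N. \<bar>fractal f x N b alpha t - fractal f x N b beta t\<bar> \<le> \<epsilon>)"
proof -
  have bdd: "\<And>g::real\<Rightarrow>real. continuous_on (Iint x N) g \<Longrightarrow> \<exists>B. \<forall>t\<in>Iint x N. \<bar>g t\<bar> \<le> B"
    unfolding Iint_def by (rule cont_bdd)
  obtain Fo where Fo: "\<forall>t\<in>Iint x N. \<bar>f t\<bar> \<le> Fo" using bdd[OF fcont] by blast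
  obtain Mo where Mo: "\<forall>r. \<forall>t\<in>Iint x N. \<bar>b r t\<bar> \<le> Mo" using bbdd by blast
  define F where "F = max Fo 0"
  define M where "M = max Mo 0"
  have Fb': "\<And>t. t \<in> Iint x N \<Longrightarrow> \<bar>f t\<bar> \<le> F" using Fo by (simp add: F_def le_max_iff_disj)
  have Mb': "\<And>r t. t \<in> Iint x N \<Longrightarrow> \<bar>b r t\<bar> \<le> M" using Mo by (simp add: M_def le_max_iff_disj)
  have FM: "0 \<le> F" "0 \<le> M" by (simp_all add: F_def M_def)
  interpret fr f x N b s F M
    apply unfold_locales
    using N part Fb' Mb' s FM by auto
  show ?thesis
  proof (intro ballI allI impI)
    fix alpha \<epsilon> assume a: "alpha \<in> Bset x N d s" and e: "(\<epsilon>::real) > 0"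
    define C where "C = F + K"
    have C: "C \<ge> K" "\<And>q. q \<in> Iint x N \<Longrightarrow> \<bar>f q\<bar> \<le> C"
      using FM apply (simp add: C_def)
      using Fb' K0 unfolding C_def by fastforce
    have CM: "C + M \<ge> 0" using K0 FM by (simp add: C_def)
    define \<delta> where "\<delta> = \<epsilon> * (1 - s) / (C + M + 1)"
    have dpos: "\<delta> > 0" using e s CM by (simp add: \<delta>_def)
    show "\<exists>\<delta>>0. \<forall>beta\<in>Bset x N d s.
           (\<forall>r\<ge>1. \<forall>i\<in>{1..N}. \<forall>t\<in>Iint x N. \<bar>alpha r i t - beta r i t\<bar> \<le> \<delta>) \<longrightarrow>
           (\<forall>t\<in>Iint x N. \<bar>fractal f x N b alpha t - fractal f x N b beta t\<bar> \<le> \<epsilon>)"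
    proof (intro exI[of _ \<delta>] conjI ballI impI dpos)
      fix beta t assume be: "beta \<in> Bset x N d s"
        and cl: "\<forall>r\<ge>1. \<forall>i\<in>{1..N}. \<forall>t\<in>Iint x N. \<bar>alpha r i t - beta r i t\<bar> \<le> \<delta>"
        and t: "t \<in> Iint x N"
      have bnd: "\<And>m. \<bar>Tcomp f x N b alpha 1 m f t - Tcomp f x N b beta 1 m f t\<bar> \<le> \<delta> * (C + M) / (1 - s)"
        by (rule Tc_diff[OF a be C(1) _ _ C(2) _ t]) (use cl dpos in auto)
      have lim: "(\<lambda>m. \<bar>Tcomp f x N b alpha 1 m f t - Tcomp f x N b beta 1 m f t\<bar>)
          \<longlonglongrightarrow> \<bar>fractal f x N b alpha t - fractal f x N b beta t\<bar>"
        by (intro tendsto_rabs tendsto_diff fractal_lim[OF a fcont bdd t] fractal_lim[OF be fcont bdd t])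
      have "\<bar>fractal f x N b alpha t - fractal f x N b beta t\<bar> \<le> \<delta> * (C + M) / (1 - s)"
        by (rule LIMSEQ_le_const2[OF lim]) (use bnd in auto)
      also have "\<dots> \<le> \<epsilon>"
      proof -
        have "\<delta> * (C + M) \<le> \<delta> * (C + M + 1)" using dpos by simp
        also have "\<dots> = \<epsilon> * (1 - s)" using CM by (simp add: \<delta>_def)
        finally show ?thesis using s by (simp add: divide_le_eq)
      qed
      finally show "\<bar>fractal f x N b alpha t - fractal f x N b beta t\<bar> \<le> \<epsilon>" .
    qed
  qed
qed

end
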